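(* Let $k\ge 2$ and let $((G_n,S_n))_{n\ge1}$ be a sequence in $\mathcal M_k$ converging to $(G,S)$. Let (P) be one of the properties: (NA) being non-amenable; (Fr) containing a non-abelian free subgroup; (La) being large. If $G_n$ has (P) for all sufficiently large $n$, then every finitely presented group admitting an epimorphism onto $G$ has (P).
   Context: $\mathcal M_k$ is the set of pairs $(G,S)$ with $S$ an ordered $k$-tuple of generators of $G$, identified with normal subgroups of the free group $F_k$ (kernels of the induced epimorphism $F_k\to G$), with the topology in which $N_n\to N$ iff for every finite $K\subset F_k$, $N_n\cap K=N\cap K$ for large $n$. A group is large if it has a finite-index subgroup admitting an epimorphism onto a non-abelian free group. *)

theory Defs
  imports "HOL-Algebra.Algebra"
begin

type_synonym word = "(nat \<times> bool) list"
  (* letter (i, True) = generator i, (i, False) = its inverse *)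

definition letters :: "word \<Rightarrow> nat set" where
  "letters w = fst ` set w"

definition word_inv :: "word \<Rightarrow> word" where
  "word_inv w = rev (map (\<lambda>(x, b). (x, \<not> b)) w)"

fun reduced :: "word \<Rightarrow> bool" where
  "reduced ((x, b) # (y, c) # w) = (\<not> (x = y \<and> b \<noteq> c) \<and> reduced ((y, c) # w))"
| "reduced _ = True"

definition eval_word :: "('g, 'm) monoid_scheme \<Rightarrow> (nat \<Rightarrow> 'g) \<Rightarrow> word \<Rightarrow> 'g" where
  "eval_word G s w =
     foldr (\<lambda>(x, b) acc. (if b then s x else inv\<^bsub>G\<^esub> (s x)) \<otimes>\<^bsub>G\<^esub> acc) w \<one>\<^bsub>G\<^esub>"

definition marked_group :: "nat \<Rightarrow> ('g, 'm) monoid_scheme \<Rightarrow> (nat \<Rightarrow> 'g) \<Rightarrow> bool" where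
  "marked_group k G S \<longleftrightarrow> group G \<and> (\<forall>i<k. S i \<in> carrier G)
     \<and> generate G (S ` {..<k}) = carrier G"

text \<open>Convergence in M_k: the kernels N_n of F_k \<rightarrow> G_n converge to the kernel N of
  F_k \<rightarrow> G, i.e. for every element w of F_k (represented by a word in the k letters),
  eventually w \<in> N_n iff w \<in> N.  (Equivalent to: N_n \<inter> K = N \<inter> K eventually, K finite.)\<close>
definition marked_converges ::
  "nat \<Rightarrow> (nat \<Rightarrow> ('g, 'm) monoid_scheme) \<Rightarrow> (nat \<Rightarrow> nat \<Rightarrow> 'g)
     \<Rightarrow> ('g, 'm) monoid_scheme \<Rightarrow> (nat \<Rightarrow> 'g) \<Rightarrow> bool" where
  "marked_converges k Gs Ss G S \<longleftrightarrow>
     (\<forall>w. letters w \<subseteq> {..<k} \<longrightarrow>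
        (\<forall>\<^sub>F n in sequentially.
            (eval_word (Gs n) (Ss n) w = \<one>\<^bsub>Gs n\<^esub>) \<longleftrightarrow> (eval_word G S w = \<one>\<^bsub>G\<^esub>)))"

text \<open>Words lying in the normal closure of R in the free group (on the letters).\<close>
inductive rel_consequence :: "word set \<Rightarrow> word \<Rightarrow> bool" for R where
  nil: "rel_consequence R []"
| rel: "r \<in> R \<Longrightarrow> rel_consequence R (u @ r @ word_inv u)"
| inv: "rel_consequence R w \<Longrightarrow> rel_consequence R (word_inv w)"
| app: "rel_consequence R v \<Longrightarrow> rel_consequence R w \<Longrightarrow> rel_consequence R (v @ w)"
| ins: "rel_consequence R (u @ v) \<Longrightarrow> rel_consequence R (u @ [(x, b), (x, \<not> b)] @ v)"
| del: "rel_consequence R (u @ [(x, b), (x, \<not> b)] @ v) \<Longrightarrow> rel_consequence R (u @ v)"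

definition finitely_presented :: "('g, 'm) monoid_scheme \<Rightarrow> bool" where
  "finitely_presented Gm \<longleftrightarrow> group Gm \<and>
     (\<exists>m s R. (\<forall>i<m. s i \<in> carrier Gm) \<and> generate Gm (s ` {..<m}) = carrier Gm
        \<and> finite R \<and> (\<forall>r\<in>R. letters r \<subseteq> {..<m})
        \<and> (\<forall>w. letters w \<subseteq> {..<m} \<longrightarrow>
               (eval_word Gm s w = \<one>\<^bsub>Gm\<^esub> \<longleftrightarrow> rel_consequence R w)))"

definition free_basis :: "('g, 'm) monoid_scheme \<Rightarrow> 'g set \<Rightarrow> bool" where
  "free_basis F B \<longleftrightarrow> B \<subseteq> carrier F \<and> generate F B = carrier F \<and>
     (\<forall>(f :: nat \<Rightarrow> 'g) w. inj_on f (letters w) \<longrightarrow> f ` letters w \<subseteq> B \<longrightarrow>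
         reduced w \<longrightarrow> w \<noteq> [] \<longrightarrow> eval_word F f w \<noteq> \<one>\<^bsub>F\<^esub>)"

definition nonabelian_free :: "('g, 'm) monoid_scheme \<Rightarrow> bool" where
  "nonabelian_free F \<longleftrightarrow> group F \<and> (\<exists>B. free_basis F B \<and> (\<exists>x\<in>B. \<exists>y\<in>B. x \<noteq> y))"

definition amenable :: "('g, 'm) monoid_scheme \<Rightarrow> bool" where
  "amenable G \<longleftrightarrow> (\<exists>\<mu> :: 'g set \<Rightarrow> real.
     \<mu> (carrier G) = 1 \<and> (\<forall>A \<subseteq> carrier G. \<mu> A \<ge> 0) \<and>
     (\<forall>A B. A \<subseteq> carrier G \<longrightarrow> B \<subseteq> carrier G \<longrightarrow> A \<inter> B = {} \<longrightarrow> \<mu> (A \<union> B) = \<mu> A + \<mu> B) \<and>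
     (\<forall>g\<in>carrier G. \<forall>A \<subseteq> carrier G. \<mu> (g <#\<^bsub>G\<^esub> A) = \<mu> A))"

definition has_free_subgroup :: "('g, 'm) monoid_scheme \<Rightarrow> bool" where
  "has_free_subgroup G \<longleftrightarrow> (\<exists>H. subgroup H G \<and> nonabelian_free (G\<lparr>carrier := H\<rparr>))"

text \<open>The target group is taken with carrier type 'g set, which is large enough to hold
  an isomorphic copy of any quotient of a subgroup of G.\<close>
definition large :: "('g, 'm) monoid_scheme \<Rightarrow> bool" where
  "large G \<longleftrightarrow> (\<exists>H. subgroup H G \<and> finite (rcosets\<^bsub>G\<^esub> H) \<and>
     (\<exists>(F :: 'g set monoid) \<phi>. nonabelian_free F \<and> \<phi> \<in> epi (G\<lparr>carrier := H\<rparr>) F))"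

datatype group_property = NA | Fr | La

fun has_property :: "group_property \<Rightarrow> ('g, 'm) monoid_scheme \<Rightarrow> bool" where
  "has_property NA G = (\<not> amenable G)"
| "has_property Fr G = has_free_subgroup G"
| "has_property La G = large G"

end

theory Submission
  imports Defs
begin


lemma eval_Nil[simp]: "eval_word G s [] = \<one>\<^bsub>G\<^esub>"
  by (simp add: eval_word_def)
lemma eval_Cons[simp]: "eval_word G s ((x,b) # w) = (if b then s x else inv\<^bsub>G\<^esub> (s x)) \<otimes>\<^bsub>G\<^esub> eval_word G s w"
  by (simp add: eval_word_def)

lemma letters_simps[simp]: "letters [] = {}" "letters ((x,b)#w) = insert x (letters w)"
  "letters (v @ w) = letters v \<union> letters w" "letters (word_inv w) = letters w"
  unfolding letters_def word_inv_def by (auto simp: image_iff) (force+)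

lemma word_inv_simps[simp]: "word_inv [] = []" "word_inv ((x,b)#w) = word_inv w @ [(x, \<not>b)]"
  "word_inv (v @ w) = word_inv w @ word_inv v"
  by (auto simp: word_inv_def)

lemma (in group) eval_closed[simp]:
  "(\<forall>x\<in>letters w. s x \<in> carrier G) \<Longrightarrow> eval_word G s w \<in> carrier G"
  by (induction w) auto

lemma (in group) eval_append:
  "(\<forall>x\<in>letters v. s x \<in> carrier G) \<Longrightarrow> (\<forall>x\<in>letters w. s x \<in> carrier G) \<Longrightarrow>
   eval_word G s (v @ w) = eval_word G s v \<otimes> eval_word G s w"
  by (induction v) (auto simp: m_assoc)

lemma (in group) eval_word_inv:
  "(\<forall>x\<in>letters w. s x \<in> carrier G) \<Longrightarrow> eval_word G s (word_inv w) = inv (eval_word G s w)"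
proof (induction w)
  case Nil then show ?case by simp
next
  case (Cons a w)
  obtain x b where a: "a = (x,b)" by force
  have sx: "s x \<in> carrier G" and sw: "\<forall>y\<in>letters w. s y \<in> carrier G" using Cons.prems by (auto simp: a)
  have e1: "eval_word G s (word_inv (a # w)) = inv (eval_word G s w) \<otimes> eval_word G s [(x, \<not> b)]"
    using Cons.IH[OF sw] sw sx by (simp add: a eval_append)
  have e2: "eval_word G s [(x, \<not> b)] = (if b then inv (s x) else s x)" using sx by simp
  have e3: "eval_word G s (a # w) = (if b then s x else inv (s x)) \<otimes> eval_word G s w" by (simp add: a)
  have A: "(if b then s x else inv (s x)) \<in> carrier G" using sx by simp
  have iA: "inv (if b then s x else inv (s x)) = (if b then inv (s x) else s x)" using sx by simp
  have E: "eval_word G s w \<in> carrier G" using sw by simp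
  have "eval_word G s (word_inv (a # w)) = inv (eval_word G s w) \<otimes> inv (if b then s x else inv (s x))"
    using e1 e2 iA by simp
  also have "\<dots> = inv ((if b then s x else inv (s x)) \<otimes> eval_word G s w)"
    by (rule inv_mult_group[OF A E, symmetric])
  finally show ?case using e3 by simp
qed

lemma eval_cong: "(\<forall>x\<in>letters w. s x = t x) \<Longrightarrow> eval_word G s w = eval_word G t w"
  by (induction w) auto

lemma eval_hom:
  assumes GG: "group G" and KK: "group K" and hh: "h \<in> hom G K" and sc: "\<forall>x\<in>letters w. s x \<in> carrier G"
  shows "h (eval_word G s w) = eval_word K (h \<circ> s) w"
proof -
  interpret group_hom G K h
    by (rule group_hom.intro[OF GG KK]) (rule group_hom_axioms.intro[OF hh])
  show ?thesis using sc
proof (induction w)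
  case Nil then show ?case by simp
next
  case (Cons a w)
  obtain x b where a: "a = (x,b)" by force
  have sx: "s x \<in> carrier G" and sw: "\<forall>y\<in>letters w. s y \<in> carrier G" using Cons.prems by (auto simp: a)
  have A: "(if b then s x else inv\<^bsub>G\<^esub> (s x)) \<in> carrier G" using sx by simp
  have E: "eval_word G s w \<in> carrier G" using G.eval_closed sw by blast
  have hA: "h (if b then s x else inv\<^bsub>G\<^esub> (s x)) = (if b then h (s x) else inv\<^bsub>K\<^esub> (h (s x)))"
    using sx by simp
  have "h (eval_word G s (a # w)) = h ((if b then s x else inv\<^bsub>G\<^esub> (s x)) \<otimes>\<^bsub>G\<^esub> eval_word G s w)"
    by (simp add: a)
  also have "\<dots> = h (if b then s x else inv\<^bsub>G\<^esub> (s x)) \<otimes>\<^bsub>K\<^esub> h (eval_word G s w)"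
    by (rule hom_mult[OF A E])
  also have "\<dots> = eval_word K (h \<circ> s) (a # w)" using hA Cons.IH[OF sw] by (simp add: a o_def)
  finally show ?case .
qed
qed

lemma (in group) generate_word:
  assumes "S ` I \<subseteq> carrier G" "x \<in> generate G (S ` I)"
  shows "\<exists>w. letters w \<subseteq> I \<and> eval_word G S w = x"
  using assms(2)
proof induction
  case one then show ?case by (intro exI[of _ "[]"]) simp
next
  case (incl h) then obtain i where i: "i \<in> I" "h = S i" by blast
  then have "S i \<in> carrier G" using assms(1) by blast
  then show ?case using i by (intro exI[of _ "[(i,True)]"]) simp
next
  case (inv h) then obtain i where i: "i \<in> I" "h = S i" by blast
  then have "S i \<in> carrier G" using assms(1) by blast
  then show ?case using i by (intro exI[of _ "[(i,False)]"]) simp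
next
  case (eng h1 h2)
  then obtain w1 w2 where w: "letters w1 \<subseteq> I" "eval_word G S w1 = h1" "letters w2 \<subseteq> I" "eval_word G S w2 = h2" by blast
  have c1: "\<forall>x\<in>letters w1. S x \<in> carrier G" "\<forall>x\<in>letters w2. S x \<in> carrier G"
    using w assms(1) by blast+
  have "eval_word G S (w1 @ w2) = h1 \<otimes> h2" using eval_append[OF c1] w by simp
  moreover have "letters (w1 @ w2) \<subseteq> I" using w by simp
  ultimately show ?case by blast
qed

lemma (in group) cancel_aux:
  "a \<in> carrier G \<Longrightarrow> v \<in> carrier G \<Longrightarrow> a \<otimes> (inv a \<otimes> v) = v"
  "a \<in> carrier G \<Longrightarrow> v \<in> carrier G \<Longrightarrow> inv a \<otimes> (a \<otimes> v) = v"
  by (simp_all add: m_assoc[symmetric])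

lemma (in group) eval_pair:
  assumes "\<forall>i. f i \<in> carrier G"
  shows "eval_word G f (u @ [(x, b), (x, \<not> b)] @ v) = eval_word G f (u @ v)"
proof -
  have c: "\<forall>y\<in>letters w. f y \<in> carrier G" for w using assms by blast
  have "eval_word G f ([(x, b), (x, \<not> b)] @ v) = eval_word G f v"
    using assms by (cases b) (simp_all add: eval_closed[OF c] cancel_aux)
  have "eval_word G f (u @ ([(x, b), (x, \<not> b)] @ v)) = eval_word G f u \<otimes> eval_word G f ([(x, b), (x, \<not> b)] @ v)"
    by (rule eval_append[OF c c])
  also have "\<dots> = eval_word G f u \<otimes> eval_word G f v" by (simp only: \<open>eval_word G f ([(x, b), (x, \<not> b)] @ v) = eval_word G f v\<close>)
  also have "\<dots> = eval_word G f (u @ v)" by (rule eval_append[OF c c, symmetric])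
  finally show ?thesis by simp
qed

lemma (in group) rel_sound:
  assumes f: "\<forall>i. f i \<in> carrier G" and fR: "\<forall>r\<in>R. eval_word G f r = \<one>"
  shows "rel_consequence R w \<Longrightarrow> eval_word G f w = \<one>"
proof (induction rule: rel_consequence.induct)
  have c: "\<forall>y\<in>letters w. f y \<in> carrier G" for w using f by blast
  {
  case (rel r u)
  have "eval_word G f (u @ r @ word_inv u) = eval_word G f u \<otimes> (eval_word G f r \<otimes> inv (eval_word G f u))"
    by (simp only: eval_append[OF c c] eval_word_inv[OF c])
  also have "\<dots> = \<one>" using rel fR eval_closed[OF c[of u]] by simp
  finally show ?case .
  next
  case (inv w)
  have "eval_word G f (word_inv w) = inv (eval_word G f w)" by (rule eval_word_inv[OF c])
  then show ?case using inv by simp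
  next
  case (app v w)
  have "eval_word G f (v @ w) = eval_word G f v \<otimes> eval_word G f w" by (rule eval_append[OF c c])
  then show ?case using app by simp
  }
next
  case (ins u v x b) then show ?case by (simp only: eval_pair[OF f])
next
  case (del u x b v) then show ?case by (simp only: eval_pair[OF f])
qed simp

lemma (in group) eq_of_inv_one:
  "x \<in> carrier G \<Longrightarrow> y \<in> carrier G \<Longrightarrow> x \<otimes> inv y = \<one> \<Longrightarrow> x = y"
  by (metis inv_closed inv_equality inv_inv)

definition subst_word :: "(nat \<Rightarrow> word) \<Rightarrow> word \<Rightarrow> word" where
  "subst_word u w = concat (map (\<lambda>(x,b). if b then u x else word_inv (u x)) w)"

lemma subst_simps[simp]: "subst_word u [] = []"
  "subst_word u ((x,b)#w) = (if b then u x else word_inv (u x)) @ subst_word u w"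
  by (simp_all add: subst_word_def)

lemma letters_subst: "(\<forall>i. letters (u i) \<subseteq> A) \<Longrightarrow> letters (subst_word u w) \<subseteq> A"
proof (induction w)
  case (Cons a w) then show ?case by (cases a) auto
qed simp

lemma (in group) eval_subst:
  assumes "\<forall>i. \<forall>x\<in>letters (u i). T x \<in> carrier G"
  shows "eval_word G T (subst_word u w) = eval_word G (\<lambda>i. eval_word G T (u i)) w"
proof (induction w)
  case (Cons a w)
  obtain x b where a: "a = (x,b)" by force
  have l: "\<forall>y\<in>letters (subst_word u w). T y \<in> carrier G"
    using letters_subst[of u "{y. T y \<in> carrier G}" w] assms by blast
  have ux: "\<forall>y\<in>letters (u x). T y \<in> carrier G" using assms by blast
  show ?case
  proof (cases b)
    case True
    then show ?thesis using Cons l ux by (simp add: a eval_append)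
  next
    case False
    then show ?thesis using Cons l ux by (simp add: a eval_append eval_word_inv)
  qed
qed simp

lemma build_hom:
  assumes GG: "group Gm" and KK: "group K"
    and s: "\<forall>i<m. s i \<in> carrier Gm" and gen: "generate Gm (s ` {..<m}) = carrier Gm"
    and pres: "\<forall>w. letters w \<subseteq> {..<m} \<longrightarrow> (eval_word Gm s w = \<one>\<^bsub>Gm\<^esub> \<longleftrightarrow> rel_consequence R w)"
    and f: "\<forall>i. f i \<in> carrier K" and fR: "\<forall>r\<in>R. eval_word K f r = \<one>\<^bsub>K\<^esub>"
  shows "\<exists>\<psi>\<in>hom Gm K. \<forall>w. letters w \<subseteq> {..<m} \<longrightarrow> \<psi> (eval_word Gm s w) = eval_word K f w"
proof -
  interpret Gm: group Gm by fact
  interpret K: group K by fact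
  have sc: "\<forall>x\<in>letters w. s x \<in> carrier Gm" if "letters w \<subseteq> {..<m}" for w
    using that s by blast
  have fc: "\<forall>x\<in>letters w. f x \<in> carrier K" for w using f by blast
  have wd: "eval_word K f a = eval_word K f b"
    if a: "letters a \<subseteq> {..<m}" and b: "letters b \<subseteq> {..<m}" and e: "eval_word Gm s a = eval_word Gm s b" for a b
  proof -
    have "eval_word Gm s (a @ word_inv b) = eval_word Gm s a \<otimes>\<^bsub>Gm\<^esub> inv\<^bsub>Gm\<^esub> eval_word Gm s b"
      using sc[OF a] sc[OF b] by (simp add: Gm.eval_append Gm.eval_word_inv)
    also have "\<dots> = \<one>\<^bsub>Gm\<^esub>" using e Gm.r_inv Gm.eval_closed[OF sc[OF b]] by simp
    finally have "eval_word Gm s (a @ word_inv b) = \<one>\<^bsub>Gm\<^esub>" .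
    moreover have "letters (a @ word_inv b) \<subseteq> {..<m}" using a b by simp
    ultimately have "rel_consequence R (a @ word_inv b)" using pres by blast
    then have "eval_word K f (a @ word_inv b) = \<one>\<^bsub>K\<^esub>" using K.rel_sound f fR by blast
    moreover have "eval_word K f (a @ word_inv b) = eval_word K f a \<otimes>\<^bsub>K\<^esub> inv\<^bsub>K\<^esub> eval_word K f b"
      using fc by (simp add: K.eval_append K.eval_word_inv)
    ultimately have "eval_word K f a \<otimes>\<^bsub>K\<^esub> inv\<^bsub>K\<^esub> eval_word K f b = \<one>\<^bsub>K\<^esub>" by simp
    from K.eq_of_inv_one[OF K.eval_closed[OF fc] K.eval_closed[OF fc] this] show ?thesis .
  qed
  have ex: "\<exists>w. letters w \<subseteq> {..<m} \<and> eval_word Gm s w = x" if "x \<in> carrier Gm" for x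
  proof -
    have "s ` {..<m} \<subseteq> carrier Gm" using s by blast
    moreover have "x \<in> generate Gm (s ` {..<m})" using gen that by simp
    ultimately show ?thesis by (rule Gm.generate_word)
  qed
  define \<psi> where "\<psi> x = eval_word K f (SOME w. letters w \<subseteq> {..<m} \<and> eval_word Gm s w = x)" for x
  have key: "\<psi> (eval_word Gm s w) = eval_word K f w" if "letters w \<subseteq> {..<m}" for w
  proof -
    have "\<exists>w'. letters w' \<subseteq> {..<m} \<and> eval_word Gm s w' = eval_word Gm s w" using that by blast
    then have "letters (SOME w'. letters w' \<subseteq> {..<m} \<and> eval_word Gm s w' = eval_word Gm s w) \<subseteq> {..<m} \<and>
       eval_word Gm s (SOME w'. letters w' \<subseteq> {..<m} \<and> eval_word Gm s w' = eval_word Gm s w) = eval_word Gm s w"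
      by (rule someI_ex)
    then show ?thesis unfolding \<psi>_def using wd that by blast
  qed
  have "\<psi> \<in> hom Gm K"
  proof (rule homI)
    fix x assume "x \<in> carrier Gm"
    then obtain w where "letters w \<subseteq> {..<m}" "eval_word Gm s w = x" using ex by blast
    then have "\<psi> x = eval_word K f w" using key by blast
    then show "\<psi> x \<in> carrier K" using K.eval_closed[OF fc] by simp
  next
    fix x y assume "x \<in> carrier Gm" "y \<in> carrier Gm"
    then obtain a b where a: "letters a \<subseteq> {..<m}" "eval_word Gm s a = x" and b: "letters b \<subseteq> {..<m}" "eval_word Gm s b = y"
      using ex by meson
    have "x \<otimes>\<^bsub>Gm\<^esub> y = eval_word Gm s (a @ b)" using a b sc[OF a(1)] sc[OF b(1)] by (simp add: Gm.eval_append)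
    then have "\<psi> (x \<otimes>\<^bsub>Gm\<^esub> y) = eval_word K f (a @ b)" using key a(1) b(1) by simp
    also have "\<dots> = eval_word K f a \<otimes>\<^bsub>K\<^esub> eval_word K f b" using fc by (simp add: K.eval_append)
    also have "\<dots> = \<psi> x \<otimes>\<^bsub>K\<^esub> \<psi> y" using key[OF a(1)] key[OF b(1)] a(2) b(2) by simp
    finally show "\<psi> (x \<otimes>\<^bsub>Gm\<^esub> y) = \<psi> x \<otimes>\<^bsub>K\<^esub> \<psi> y" .
  qed
  then show ?thesis using key by blast
qed

lemma fp_epi_eventually:
  assumes mg: "\<forall>n. marked_group k (Gs n) (Ss n)"
    and mG: "marked_group k G S"
    and conv: "marked_converges k Gs Ss G S"
    and fp: "finitely_presented \<Gamma>"
    and h: "h \<in> epi \<Gamma> G"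
  shows "\<forall>\<^sub>F n in sequentially. \<exists>\<psi>. \<psi> \<in> epi \<Gamma> (Gs n)"
proof -
  obtain m s R where s: "\<forall>i<m. s i \<in> carrier \<Gamma>" and gen: "generate \<Gamma> (s ` {..<m}) = carrier \<Gamma>"
    and fR: "finite R" and RL: "\<forall>r\<in>R. letters r \<subseteq> {..<m}"
    and pres: "\<forall>w. letters w \<subseteq> {..<m} \<longrightarrow> (eval_word \<Gamma> s w = \<one>\<^bsub>\<Gamma>\<^esub> \<longleftrightarrow> rel_consequence R w)"
    using fp unfolding finitely_presented_def by blast
  have gGa: "group \<Gamma>" using fp unfolding finitely_presented_def by blast
  interpret Ga: group \<Gamma> by fact
  have gG: "group G" and SG: "\<forall>i<k. S i \<in> carrier G" and genG: "generate G (S ` {..<k}) = carrier G"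
    using mG unfolding marked_group_def by auto
  interpret G: group G by fact
  have hh: "h \<in> hom \<Gamma> G" and hs: "h ` carrier \<Gamma> = carrier G" using h by (auto simp: epi_def)
  interpret hG: group_hom \<Gamma> G h using hh by (simp add: group_hom.intro group_hom_axioms.intro gGa gG)
  have SGi: "S ` {..<k} \<subseteq> carrier G" using SG by auto
  define u where "u i = (if i < m then (SOME w. letters w \<subseteq> {..<k} \<and> eval_word G S w = h (s i)) else [])" for i
  have u: "letters (u i) \<subseteq> {..<k} \<and> (i < m \<longrightarrow> eval_word G S (u i) = h (s i))" for i
  proof (cases "i < m")
    case True
    then have "h (s i) \<in> generate G (S ` {..<k})" using s genG by auto
    then have "\<exists>w. letters w \<subseteq> {..<k} \<and> eval_word G S w = h (s i)" using G.generate_word SGi by blast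
    then have "letters (SOME w. letters w \<subseteq> {..<k} \<and> eval_word G S w = h (s i)) \<subseteq> {..<k} \<and>
      eval_word G S (SOME w. letters w \<subseteq> {..<k} \<and> eval_word G S w = h (s i)) = h (s i)"
      by (rule someI_ex)
    then show ?thesis unfolding u_def using True by simp
  qed (simp add: u_def)
  have uc: "\<forall>i. \<forall>x\<in>letters (u i). S x \<in> carrier G" using u SG by blast
  have sc: "\<forall>x\<in>letters w. s x \<in> carrier \<Gamma>" if "letters w \<subseteq> {..<m}" for w
    using that s by auto
  have Gsub: "eval_word G S (subst_word u w) = h (eval_word \<Gamma> s w)" if "letters w \<subseteq> {..<m}" for w
  proof -
    have "eval_word G S (subst_word u w) = eval_word G (\<lambda>i. eval_word G S (u i)) w"
      using G.eval_subst uc by blast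
    also have "\<dots> = eval_word G (h \<circ> s) w" using that u by (intro eval_cong) auto
    also have "\<dots> = h (eval_word \<Gamma> s w)" using eval_hom[OF gGa gG hh sc[OF that]] by simp
    finally show ?thesis .
  qed
  have lsub: "letters (subst_word u w) \<subseteq> {..<k}" for w using letters_subst u by blast
  have "rel_consequence R r" if "r \<in> R" for r
    using rel_consequence.rel[OF that, of "[]"] by simp
  then have R1: "eval_word G S (subst_word u r) = \<one>\<^bsub>G\<^esub>" if "r \<in> R" for r
  proof -
    have "eval_word \<Gamma> s r = \<one>\<^bsub>\<Gamma>\<^esub>" using RL pres that \<open>\<And>r. r \<in> R \<Longrightarrow> rel_consequence R r\<close> by blast
    then show ?thesis using Gsub[of r] RL that by simp
  qed
  have convw: "\<forall>\<^sub>F n in sequentially. (eval_word (Gs n) (Ss n) w = \<one>\<^bsub>Gs n\<^esub>) \<longleftrightarrow> (eval_word G S w = \<one>\<^bsub>G\<^esub>)"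
    if "letters w \<subseteq> {..<k}" for w
    using conv that unfolding marked_converges_def by blast
  have ev1: "\<forall>\<^sub>F n in sequentially. \<forall>r\<in>R. eval_word (Gs n) (Ss n) (subst_word u r) = \<one>\<^bsub>Gs n\<^esub>"
  proof (rule eventually_ball_finite[OF fR], intro ballI)
    fix r assume "r \<in> R"
    have E: "eval_word G S (subst_word u r) = \<one>\<^bsub>G\<^esub>" using R1 \<open>r \<in> R\<close> by blast
    show "\<forall>\<^sub>F n in sequentially. eval_word (Gs n) (Ss n) (subst_word u r) = \<one>\<^bsub>Gs n\<^esub>"
      using convw[OF lsub[of r]] by (rule eventually_mono) (simp add: E)
  qed
  define v where "v j = (SOME v. letters v \<subseteq> {..<m} \<and> h (eval_word \<Gamma> s v) = S j)" for j
  have v: "letters (v j) \<subseteq> {..<m} \<and> h (eval_word \<Gamma> s (v j)) = S j" if "j < k" for j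
  proof -
    have "S j \<in> h ` carrier \<Gamma>" using hs SG that by simp
    then obtain t where t: "t \<in> carrier \<Gamma>" "h t = S j" by auto
    then obtain w where "letters w \<subseteq> {..<m}" "eval_word \<Gamma> s w = t"
      using Ga.generate_word[of s "{..<m}" t] s gen by auto
    then have "\<exists>v. letters v \<subseteq> {..<m} \<and> h (eval_word \<Gamma> s v) = S j" using t by blast
    then show ?thesis unfolding v_def by (rule someI_ex)
  qed
  have z1: "eval_word G S (subst_word u (v j) @ [(j,False)]) = \<one>\<^bsub>G\<^esub>" if "j < k" for j
  proof -
    have "\<forall>x\<in>letters (subst_word u (v j)). S x \<in> carrier G" using lsub SG by blast
    then show ?thesis using v[OF that] Gsub[of "v j"] SG that by (simp add: G.eval_append)
  qed
  have ev2: "\<forall>\<^sub>F n in sequentially. \<forall>j\<in>{..<k}. eval_word (Gs n) (Ss n) (subst_word u (v j) @ [(j,False)]) = \<one>\<^bsub>Gs n\<^esub>"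
  proof (rule eventually_ball_finite, simp, intro ballI)
    fix j assume j: "j \<in> {..<k}"
    have L: "letters (subst_word u (v j) @ [(j,False)]) \<subseteq> {..<k}" using lsub j by auto
    have E: "eval_word G S (subst_word u (v j) @ [(j,False)]) = \<one>\<^bsub>G\<^esub>" using z1 j by blast
    show "\<forall>\<^sub>F n in sequentially. eval_word (Gs n) (Ss n) (subst_word u (v j) @ [(j,False)]) = \<one>\<^bsub>Gs n\<^esub>"
      using convw[OF L] by (rule eventually_mono) (simp add: E)
  qed
  show ?thesis
  proof (rule eventually_mono[OF eventually_conj[OF ev1 ev2]])
    fix n
    assume H: "(\<forall>r\<in>R. eval_word (Gs n) (Ss n) (subst_word u r) = \<one>\<^bsub>Gs n\<^esub>) \<and>
      (\<forall>j\<in>{..<k}. eval_word (Gs n) (Ss n) (subst_word u (v j) @ [(j,False)]) = \<one>\<^bsub>Gs n\<^esub>)"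
    let ?K = "Gs n"
    have gK: "group ?K" and SK: "\<forall>i<k. Ss n i \<in> carrier ?K" and genK: "generate ?K (Ss n ` {..<k}) = carrier ?K"
      using mg unfolding marked_group_def by auto
    interpret K: group ?K by fact
    define f where "f i = eval_word ?K (Ss n) (u i)" for i
    have ukc: "\<forall>i. \<forall>x\<in>letters (u i). Ss n x \<in> carrier ?K" using u SK by blast
    have fc: "\<forall>i. f i \<in> carrier ?K" unfolding f_def using ukc by auto
    have Ksub: "eval_word ?K (Ss n) (subst_word u w) = eval_word ?K f w" for w
      unfolding f_def using K.eval_subst ukc by blast
    have fR1: "\<forall>r\<in>R. eval_word ?K f r = \<one>\<^bsub>?K\<^esub>" using H Ksub by auto
    obtain \<psi> where \<psi>hom: "\<psi> \<in> hom \<Gamma> ?K" and \<psi>e: "\<forall>w. letters w \<subseteq> {..<m} \<longrightarrow> \<psi> (eval_word \<Gamma> s w) = eval_word ?K f w"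
      using build_hom[OF gGa gK s gen pres fc fR1] by blast
    interpret pK: group_hom \<Gamma> ?K \<psi> using \<psi>hom by (simp add: group_hom.intro group_hom_axioms.intro gGa gK)
    have "Ss n j \<in> \<psi> ` carrier \<Gamma>" if j: "j < k" for j
    proof -
      have "\<forall>x\<in>letters (subst_word u (v j)). Ss n x \<in> carrier ?K" using lsub SK by blast
      moreover have "Ss n j \<in> carrier ?K" using SK j by blast
      ultimately have A: "eval_word ?K (Ss n) (subst_word u (v j) @ [(j,False)]) = eval_word ?K (Ss n) (subst_word u (v j)) \<otimes>\<^bsub>?K\<^esub> inv\<^bsub>?K\<^esub> (Ss n j)"
        by (simp add: K.eval_append)
      have B: "eval_word ?K (Ss n) (subst_word u (v j) @ [(j,False)]) = \<one>\<^bsub>?K\<^esub>" using H j by blast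
      have C: "eval_word ?K (Ss n) (subst_word u (v j)) \<in> carrier ?K" using \<open>\<forall>x\<in>letters (subst_word u (v j)). Ss n x \<in> carrier ?K\<close> by simp
      from A B have "eval_word ?K (Ss n) (subst_word u (v j)) \<otimes>\<^bsub>?K\<^esub> inv\<^bsub>?K\<^esub> (Ss n j) = \<one>\<^bsub>?K\<^esub>" by simp
      from K.eq_of_inv_one[OF C \<open>Ss n j \<in> carrier ?K\<close> this]
      have "eval_word ?K (Ss n) (subst_word u (v j)) = Ss n j" .
      then have "\<psi> (eval_word \<Gamma> s (v j)) = Ss n j" using \<psi>e v[OF j] Ksub by simp
      moreover have "eval_word \<Gamma> s (v j) \<in> carrier \<Gamma>" using sc v[OF j] by auto
      ultimately show ?thesis by (metis image_eqI)
    qed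
    then have "generate ?K (Ss n ` {..<k}) \<subseteq> \<psi> ` carrier \<Gamma>"
      by (intro K.generate_subgroup_incl pK.img_is_subgroup) auto
    then have "\<psi> ` carrier \<Gamma> = carrier ?K" using genK pK.hom_closed by auto
    then show "\<exists>\<psi>. \<psi> \<in> epi \<Gamma> (Gs n)" using \<psi>hom unfolding epi_def by blast
  qed
qed

lemma nonabelian_free_iso:
  assumes AA: "group A" and BB: "group B" and si: "\<sigma> \<in> iso A B" and nf: "nonabelian_free B"
  shows "nonabelian_free A"
proof -
  have hh: "\<sigma> \<in> hom A B" and bj: "bij_betw \<sigma> (carrier A) (carrier B)" using si unfolding iso_def by blast+
  have inj: "inj_on \<sigma> (carrier A)" and sj: "\<sigma> ` carrier A = carrier B" using bj unfolding bij_betw_def by blast+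
  interpret A: group A by fact
  interpret B: group B by fact
  interpret p: group_hom A B \<sigma>
    by (rule group_hom.intro[OF AA BB]) (rule group_hom_axioms.intro[OF hh])
  obtain Bb x y where fb: "free_basis B Bb" and xB: "x \<in> Bb" and yB: "y \<in> Bb" and xy: "x \<noteq> y"
    using nf unfolding nonabelian_free_def by blast
  have Bbc: "Bb \<subseteq> carrier B" and genB: "generate B Bb = carrier B" using fb unfolding free_basis_def by blast+
  define Ba where "Ba = {a \<in> carrier A. \<sigma> a \<in> Bb}"
  have Bac: "Ba \<subseteq> carrier A" unfolding Ba_def by blast
  have imB: "\<sigma> ` Ba = Bb"
  proof
    show "\<sigma> ` Ba \<subseteq> Bb" unfolding Ba_def by blast
  next
    show "Bb \<subseteq> \<sigma> ` Ba"
    proof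
      fix b assume b: "b \<in> Bb"
      then have "b \<in> \<sigma> ` carrier A" using Bbc sj by blast
      then obtain a where a: "a \<in> carrier A" "b = \<sigma> a" by (auto simp: image_iff)
      then have "a \<in> Ba" unfolding Ba_def using b by simp
      then show "b \<in> \<sigma> ` Ba" using a(2) by blast
    qed
  qed
  have "\<sigma> ` generate A Ba = generate B (\<sigma> ` Ba)" by (rule p.generate_img[OF Bac, symmetric])
  also have "\<dots> = \<sigma> ` carrier A" using imB genB sj by simp
  finally have "\<sigma> ` generate A Ba = \<sigma> ` carrier A" .
  then have genA: "generate A Ba = carrier A"
    using inj_on_image_eq_iff[OF inj A.generate_incl[OF Bac] subset_refl] by blast
  have free: "eval_word A f w \<noteq> \<one>\<^bsub>A\<^esub>"
    if finj: "inj_on f (letters w)" and fl: "f ` letters w \<subseteq> Ba" and red: "reduced w" and ne: "w \<noteq> []"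
    for f :: "nat \<Rightarrow> 'a" and w
  proof
    assume e: "eval_word A f w = \<one>\<^bsub>A\<^esub>"
    have fc: "\<forall>z\<in>letters w. f z \<in> carrier A" using fl Bac by blast
    have "eval_word B (\<sigma> \<circ> f) w = \<sigma> (eval_word A f w)" using eval_hom[OF AA BB hh fc] by simp
    then have e2: "eval_word B (\<sigma> \<circ> f) w = \<one>\<^bsub>B\<^esub>" using e by simp
    have "inj_on \<sigma> (f ` letters w)" using inj fl Bac by (meson inj_on_subset subset_trans)
    then have pinj: "inj_on (\<sigma> \<circ> f) (letters w)" using finj by (rule comp_inj_on[rotated])
    have "(\<sigma> \<circ> f) ` letters w \<subseteq> Bb" using fl imB by (auto simp: image_comp[symmetric])
    then show False using fb pinj red ne e2 unfolding free_basis_def by blast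
  qed
  have "x \<in> \<sigma> ` Ba" "y \<in> \<sigma> ` Ba" using imB xB yB by simp_all
  then obtain x' y' where x': "x' \<in> Ba" "x = \<sigma> x'" and y': "y' \<in> Ba" "y = \<sigma> y'" by (auto simp: image_iff)
  have "x' \<noteq> y'" using x' y' xy by auto
  moreover have "free_basis A Ba" unfolding free_basis_def using Bac genA free by blast
  ultimately show ?thesis unfolding nonabelian_free_def using AA x' y' by blast
qed

lemma finite_image_factor:
  assumes "finite (g ` Dom)" and "\<And>a b. a \<in> Dom \<Longrightarrow> b \<in> Dom \<Longrightarrow> g a = g b \<Longrightarrow> f a = f b"
  shows "finite (f ` Dom)"
proof -
  have "f ` Dom \<subseteq> (\<lambda>c. f (inv_into Dom g c)) ` (g ` Dom)"
  proof
    fix z assume "z \<in> f ` Dom"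
    then obtain a where a: "a \<in> Dom" "z = f a" by blast
    have "inv_into Dom g (g a) \<in> Dom" using a(1) by (rule inv_into_into[OF imageI])
    moreover have "g (inv_into Dom g (g a)) = g a" using a(1) by (rule f_inv_into_f[OF imageI])
    ultimately have "f (inv_into Dom g (g a)) = f a" using assms(2) a(1) by blast
    then show "z \<in> (\<lambda>c. f (inv_into Dom g c)) ` (g ` Dom)" using a by force
  qed
  then show ?thesis using assms(1) finite_subset by blast
qed

lemma large_quot:
  fixes \<Gamma> :: "('a, 'c) monoid_scheme" and K :: "('b, 'd) monoid_scheme"
  assumes GG: "group \<Gamma>" and KK: "group K" and ep: "\<psi> \<in> epi \<Gamma> K" and la: "large K"
  shows "large \<Gamma>"
proof -
  have hh: "\<psi> \<in> hom \<Gamma> K" and sj: "\<psi> ` carrier \<Gamma> = carrier K" using ep unfolding epi_def by blast+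
  interpret Ga: group \<Gamma> by fact
  interpret K: group K by fact
  interpret p: group_hom \<Gamma> K \<psi>
    by (rule group_hom.intro[OF GG KK]) (rule group_hom_axioms.intro[OF hh])
  have "\<exists>H. subgroup H K \<and> finite (rcosets\<^bsub>K\<^esub> H) \<and>
     (\<exists>(F :: 'b set monoid) \<phi>. nonabelian_free F \<and> \<phi> \<in> epi (K\<lparr>carrier := H\<rparr>) F)"
    using la unfolding large_def .
  then obtain H where HH: "subgroup H K \<and> finite (rcosets\<^bsub>K\<^esub> H) \<and>
     (\<exists>(F :: 'b set monoid) \<phi>. nonabelian_free F \<and> \<phi> \<in> epi (K\<lparr>carrier := H\<rparr>) F)" ..
  note H = HH[THEN conjunct1] and fin = HH[THEN conjunct2, THEN conjunct1]
  have "\<exists>(F :: 'b set monoid) \<phi>. nonabelian_free F \<and> \<phi> \<in> epi (K\<lparr>carrier := H\<rparr>) F"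
    using HH by (rule conjunct2[THEN conjunct2])
  then obtain F :: "'b set monoid" where "\<exists>\<phi>. nonabelian_free F \<and> \<phi> \<in> epi (K\<lparr>carrier := H\<rparr>) F" ..
  then obtain \<phi> where FP: "nonabelian_free F \<and> \<phi> \<in> epi (K\<lparr>carrier := H\<rparr>) F" ..
  note nf = FP[THEN conjunct1] and phe = FP[THEN conjunct2]
  have FF: "group F" using nf unfolding nonabelian_free_def by blast
  have phh: "\<phi> \<in> hom (K\<lparr>carrier := H\<rparr>) F" and phs: "\<phi> ` H = carrier F" using phe unfolding epi_def by simp_all
  have Hc: "H \<subseteq> carrier K" by (rule subgroup.subset[OF H])
  define H' where "H' = {x \<in> carrier \<Gamma>. \<psi> x \<in> H}"
  have H'c: "H' \<subseteq> carrier \<Gamma>" unfolding H'_def by blast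
  have H'sub: "subgroup H' \<Gamma>"
  proof (rule Ga.subgroupI)
    show "H' \<subseteq> carrier \<Gamma>" by (rule H'c)
    show "H' \<noteq> {}"
    proof -
      have "\<one>\<^bsub>\<Gamma>\<^esub> \<in> H'" unfolding H'_def using subgroup.one_closed[OF H] by simp
      then show ?thesis by blast
    qed
  next
    fix a assume a: "a \<in> H'"
    then have ac: "a \<in> carrier \<Gamma>" and pa: "\<psi> a \<in> H" unfolding H'_def by simp_all
    have "\<psi> (inv\<^bsub>\<Gamma>\<^esub> a) = inv\<^bsub>K\<^esub> (\<psi> a)" by (rule p.hom_inv[OF ac])
    then show "inv\<^bsub>\<Gamma>\<^esub> a \<in> H'" unfolding H'_def using ac pa subgroup.m_inv_closed[OF H pa] by simp
  next
    fix a b assume a: "a \<in> H'" and b: "b \<in> H'"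
    then have ac: "a \<in> carrier \<Gamma>" and pa: "\<psi> a \<in> H" and bc: "b \<in> carrier \<Gamma>" and pb: "\<psi> b \<in> H"
      unfolding H'_def by simp_all
    have "\<psi> (a \<otimes>\<^bsub>\<Gamma>\<^esub> b) = \<psi> a \<otimes>\<^bsub>K\<^esub> \<psi> b" by (rule p.hom_mult[OF ac bc])
    then show "a \<otimes>\<^bsub>\<Gamma>\<^esub> b \<in> H'" unfolding H'_def using ac bc subgroup.m_closed[OF H pa pb] by simp
  qed
  have rc: "rcosets\<^bsub>\<Gamma>\<^esub> H' = (\<lambda>a. H' #>\<^bsub>\<Gamma>\<^esub> a) ` carrier \<Gamma>" unfolding RCOSETS_def by blast
  have rcK: "(\<lambda>a. H #>\<^bsub>K\<^esub> \<psi> a) ` carrier \<Gamma> \<subseteq> rcosets\<^bsub>K\<^esub> H"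
    unfolding RCOSETS_def using p.hom_closed by blast
  have finI: "finite (rcosets\<^bsub>\<Gamma>\<^esub> H')" unfolding rc
  proof (rule finite_image_factor[where g = "\<lambda>a. H #>\<^bsub>K\<^esub> \<psi> a"])
    show "finite ((\<lambda>a. H #>\<^bsub>K\<^esub> \<psi> a) ` carrier \<Gamma>)" using rcK fin finite_subset by blast
  next
    fix a b assume a: "a \<in> carrier \<Gamma>" and b: "b \<in> carrier \<Gamma>" and eq: "H #>\<^bsub>K\<^esub> \<psi> a = H #>\<^bsub>K\<^esub> \<psi> b"
    have pa: "\<psi> a \<in> carrier K" and pb: "\<psi> b \<in> carrier K" using a b by simp_all
    have "\<psi> a \<in> H #>\<^bsub>K\<^esub> \<psi> a" by (rule K.rcos_self[OF pa H])
    then have "\<psi> a \<in> H #>\<^bsub>K\<^esub> \<psi> b" using eq by simp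
    then have "\<psi> a \<otimes>\<^bsub>K\<^esub> inv\<^bsub>K\<^esub> \<psi> b \<in> H" by (rule subgroup.rcos_module_imp[OF H KK pb])
    moreover have "\<psi> (a \<otimes>\<^bsub>\<Gamma>\<^esub> inv\<^bsub>\<Gamma>\<^esub> b) = \<psi> a \<otimes>\<^bsub>K\<^esub> inv\<^bsub>K\<^esub> \<psi> b" using a b by simp
    ultimately have "a \<otimes>\<^bsub>\<Gamma>\<^esub> inv\<^bsub>\<Gamma>\<^esub> b \<in> H'" unfolding H'_def using a b by simp
    then have "a \<in> H' #>\<^bsub>\<Gamma>\<^esub> b" by (rule subgroup.rcos_module_rev[OF H'sub GG b a])
    then have "H' #>\<^bsub>\<Gamma>\<^esub> b = H' #>\<^bsub>\<Gamma>\<^esub> a" by (rule Ga.repr_independence[OF _ b H'sub])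
    then show "H' #>\<^bsub>\<Gamma>\<^esub> a = H' #>\<^bsub>\<Gamma>\<^esub> b" by simp
  qed
  let ?G' = "\<Gamma>\<lparr>carrier := H'\<rparr>"
  have G'G: "group ?G'" by (rule Ga.subgroup_imp_group[OF H'sub])
  define \<chi> where "\<chi> x = \<phi> (\<psi> x)" for x
  have chh: "\<chi> \<in> hom ?G' F"
  proof (rule homI)
    fix x assume "x \<in> carrier ?G'"
    then have "\<psi> x \<in> H" unfolding H'_def by simp
    then show "\<chi> x \<in> carrier F" unfolding \<chi>_def using hom_in_carrier[OF phh] by simp
  next
    fix x y assume "x \<in> carrier ?G'" "y \<in> carrier ?G'"
    then have x: "x \<in> carrier \<Gamma>" "\<psi> x \<in> H" and y: "y \<in> carrier \<Gamma>" "\<psi> y \<in> H" unfolding H'_def by simp_all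
    have "\<psi> (x \<otimes>\<^bsub>\<Gamma>\<^esub> y) = \<psi> x \<otimes>\<^bsub>K\<^esub> \<psi> y" by (rule p.hom_mult[OF x(1) y(1)])
    moreover have "\<phi> (\<psi> x \<otimes>\<^bsub>K\<lparr>carrier := H\<rparr>\<^esub> \<psi> y) = \<phi> (\<psi> x) \<otimes>\<^bsub>F\<^esub> \<phi> (\<psi> y)"
      using hom_mult[OF phh] x(2) y(2) by simp
    ultimately show "\<chi> (x \<otimes>\<^bsub>?G'\<^esub> y) = \<chi> x \<otimes>\<^bsub>F\<^esub> \<chi> y" unfolding \<chi>_def by simp
  qed
  have chs: "\<chi> ` carrier ?G' = carrier F"
  proof
    show "\<chi> ` carrier ?G' \<subseteq> carrier F" using chh unfolding hom_def by auto
  next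
    show "carrier F \<subseteq> \<chi> ` carrier ?G'"
    proof
      fix z assume "z \<in> carrier F"
      then have "z \<in> \<phi> ` H" using phs by simp
      then obtain k where k: "k \<in> H" "z = \<phi> k" by (auto simp: image_iff)
      then have "k \<in> \<psi> ` carrier \<Gamma>" using Hc sj by blast
      then obtain x where x: "x \<in> carrier \<Gamma>" "k = \<psi> x" by (auto simp: image_iff)
      then have "x \<in> carrier ?G'" unfolding H'_def using k by simp
      moreover have "z = \<chi> x" unfolding \<chi>_def using k x by simp
      ultimately show "z \<in> \<chi> ` carrier ?G'" by blast
    qed
  qed
  interpret c: group_hom ?G' F \<chi>
    by (rule group_hom.intro[OF G'G FF]) (rule group_hom_axioms.intro[OF chh])
  let ?N = "kernel ?G' F \<chi>"
  have Nn: "?N \<lhd> ?G'" by (rule c.normal_kernel)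
  have FG: "group (?G' Mod ?N)" by (rule normal.factorgroup_is_group[OF Nn])
  have iso: "(\<lambda>Z0. the_elem (\<chi> ` Z0)) \<in> iso (?G' Mod ?N) F" by (rule c.FactGroup_iso_set[OF chs])
  have nf': "nonabelian_free (?G' Mod ?N)" by (rule nonabelian_free_iso[OF FG FF iso nf])
  have qh: "(\<lambda>a. ?N #>\<^bsub>?G'\<^esub> a) \<in> hom ?G' (?G' Mod ?N)" by (rule normal.r_coset_hom_Mod[OF Nn])
  have "(\<lambda>a. ?N #>\<^bsub>?G'\<^esub> a) ` carrier ?G' = carrier (?G' Mod ?N)"
    unfolding FactGroup_def RCOSETS_def by auto
  then have qe: "(\<lambda>a. ?N #>\<^bsub>?G'\<^esub> a) \<in> epi ?G' (?G' Mod ?N)" using qh unfolding epi_def by blast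
  show ?thesis unfolding large_def
    by (intro exI[of _ H'] conjI H'sub finI exI[of _ "?G' Mod ?N"] exI[of _ "\<lambda>a. ?N #>\<^bsub>?G'\<^esub> a"] nf' qe)
qed



lemma amenable_quot:
  assumes GG: "group \<Gamma>" and KK: "group K" and ep: "\<psi> \<in> epi \<Gamma> K" and am: "amenable \<Gamma>"
  shows "amenable K"
proof -
  have hh: "\<psi> \<in> hom \<Gamma> K" and sj: "\<psi> ` carrier \<Gamma> = carrier K" using ep unfolding epi_def by blast+
  interpret Ga: group \<Gamma> by fact
  interpret K: group K by fact
  interpret p: group_hom \<Gamma> K \<psi>
    by (rule group_hom.intro[OF GG KK]) (rule group_hom_axioms.intro[OF hh])
  have "\<exists>\<mu> :: 'a set \<Rightarrow> real. \<mu> (carrier \<Gamma>) = 1 \<and> (\<forall>A \<subseteq> carrier \<Gamma>. \<mu> A \<ge> 0) \<and>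
     (\<forall>A B. A \<subseteq> carrier \<Gamma> \<longrightarrow> B \<subseteq> carrier \<Gamma> \<longrightarrow> A \<inter> B = {} \<longrightarrow> \<mu> (A \<union> B) = \<mu> A + \<mu> B) \<and>
     (\<forall>g\<in>carrier \<Gamma>. \<forall>A \<subseteq> carrier \<Gamma>. \<mu> (g <#\<^bsub>\<Gamma>\<^esub> A) = \<mu> A)"
    using am unfolding amenable_def .
  then obtain \<mu> :: "'a set \<Rightarrow> real" where mu: "\<mu> (carrier \<Gamma>) = 1 \<and> (\<forall>A \<subseteq> carrier \<Gamma>. \<mu> A \<ge> 0) \<and>
     (\<forall>A B. A \<subseteq> carrier \<Gamma> \<longrightarrow> B \<subseteq> carrier \<Gamma> \<longrightarrow> A \<inter> B = {} \<longrightarrow> \<mu> (A \<union> B) = \<mu> A + \<mu> B) \<and>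
     (\<forall>g\<in>carrier \<Gamma>. \<forall>A \<subseteq> carrier \<Gamma>. \<mu> (g <#\<^bsub>\<Gamma>\<^esub> A) = \<mu> A)" ..
  note m1 = mu[THEN conjunct1] and m2 = mu[THEN conjunct2, THEN conjunct1]
    and m3 = mu[THEN conjunct2, THEN conjunct2, THEN conjunct1] and m4 = mu[THEN conjunct2, THEN conjunct2, THEN conjunct2]
  define \<nu> where "\<nu> A = \<mu> (carrier \<Gamma> \<inter> \<psi> -` A)" for A
  have n1: "\<nu> (carrier K) = 1"
  proof -
    have "carrier \<Gamma> \<inter> \<psi> -` carrier K = carrier \<Gamma>" using p.hom_closed by blast
    then show ?thesis using m1 unfolding \<nu>_def by simp
  qed
  have n2: "\<forall>A \<subseteq> carrier K. \<nu> A \<ge> 0"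
  proof (intro allI impI)
    fix A :: "'c set"
    have "carrier \<Gamma> \<inter> \<psi> -` A \<subseteq> carrier \<Gamma>" by (rule Int_lower1)
    then show "\<nu> A \<ge> 0" unfolding \<nu>_def by (rule m2[rule_format])
  qed
  have n3: "\<forall>A B. A \<subseteq> carrier K \<longrightarrow> B \<subseteq> carrier K \<longrightarrow> A \<inter> B = {} \<longrightarrow> \<nu> (A \<union> B) = \<nu> A + \<nu> B"
  proof (intro allI impI)
    fix A B assume "A \<subseteq> carrier K" "B \<subseteq> carrier K" and d: "A \<inter> B = {}"
    have "carrier \<Gamma> \<inter> \<psi> -` (A \<union> B) = (carrier \<Gamma> \<inter> \<psi> -` A) \<union> (carrier \<Gamma> \<inter> \<psi> -` B)" by blast
    moreover have "(carrier \<Gamma> \<inter> \<psi> -` A) \<inter> (carrier \<Gamma> \<inter> \<psi> -` B) = {}" using d by blast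
    ultimately show "\<nu> (A \<union> B) = \<nu> A + \<nu> B" unfolding \<nu>_def
      using m3[rule_format, OF Int_lower1 Int_lower1] by simp
  qed
  have n4: "\<forall>g\<in>carrier K. \<forall>A \<subseteq> carrier K. \<nu> (g <#\<^bsub>K\<^esub> A) = \<nu> A"
  proof (intro ballI allI impI)
    fix g A assume g: "g \<in> carrier K" and A: "A \<subseteq> carrier K"
    have "g \<in> \<psi> ` carrier \<Gamma>" using g sj by simp
    then obtain c where c: "c \<in> carrier \<Gamma>" "\<psi> c = g" by (auto simp: image_iff)
    have eq: "carrier \<Gamma> \<inter> \<psi> -` (g <#\<^bsub>K\<^esub> A) = c <#\<^bsub>\<Gamma>\<^esub> (carrier \<Gamma> \<inter> \<psi> -` A)"
    proof
      show "carrier \<Gamma> \<inter> \<psi> -` (g <#\<^bsub>K\<^esub> A) \<subseteq> c <#\<^bsub>\<Gamma>\<^esub> (carrier \<Gamma> \<inter> \<psi> -` A)"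
      proof
        fix x assume x: "x \<in> carrier \<Gamma> \<inter> \<psi> -` (g <#\<^bsub>K\<^esub> A)"
        then obtain a where a: "a \<in> A" "\<psi> x = g \<otimes>\<^bsub>K\<^esub> a" unfolding l_coset_def by blast
        define y where "y = inv\<^bsub>\<Gamma>\<^esub> c \<otimes>\<^bsub>\<Gamma>\<^esub> x"
        have xc: "x \<in> carrier \<Gamma>" using x by blast
        have yc: "y \<in> carrier \<Gamma>" unfolding y_def by (rule Ga.m_closed[OF Ga.inv_closed[OF c(1)] xc])
        have ac: "a \<in> carrier K" using a A by blast
        have "\<psi> y = inv\<^bsub>K\<^esub> g \<otimes>\<^bsub>K\<^esub> (g \<otimes>\<^bsub>K\<^esub> a)" unfolding y_def
          by (simp only: p.hom_mult[OF Ga.inv_closed[OF c(1)] xc] p.hom_inv[OF c(1)] c(2) a(2))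
        also have "\<dots> = a" by (simp only: K.m_assoc[symmetric, OF K.inv_closed[OF g] g ac] K.l_inv[OF g] K.l_one[OF ac])
        finally have "\<psi> y \<in> A" using a by simp
        moreover have "x = c \<otimes>\<^bsub>\<Gamma>\<^esub> y" unfolding y_def
          by (simp only: Ga.m_assoc[symmetric, OF c(1) Ga.inv_closed[OF c(1)] xc] Ga.r_inv[OF c(1)] Ga.l_one[OF xc])
        ultimately show "x \<in> c <#\<^bsub>\<Gamma>\<^esub> (carrier \<Gamma> \<inter> \<psi> -` A)" unfolding l_coset_def using yc by blast
      qed
    next
      show "c <#\<^bsub>\<Gamma>\<^esub> (carrier \<Gamma> \<inter> \<psi> -` A) \<subseteq> carrier \<Gamma> \<inter> \<psi> -` (g <#\<^bsub>K\<^esub> A)"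
      proof
        fix x assume "x \<in> c <#\<^bsub>\<Gamma>\<^esub> (carrier \<Gamma> \<inter> \<psi> -` A)"
        then obtain y where y: "y \<in> carrier \<Gamma>" "\<psi> y \<in> A" "x = c \<otimes>\<^bsub>\<Gamma>\<^esub> y" unfolding l_coset_def by blast
        have "x \<in> carrier \<Gamma>" unfolding y(3) by (rule Ga.m_closed[OF c(1) y(1)])
        moreover have "\<psi> x = g \<otimes>\<^bsub>K\<^esub> \<psi> y" unfolding y(3) c(2)[symmetric] by (rule p.hom_mult[OF c(1) y(1)])
        ultimately show "x \<in> carrier \<Gamma> \<inter> \<psi> -` (g <#\<^bsub>K\<^esub> A)" using y unfolding l_coset_def by blast
      qed
    qed
    have "carrier \<Gamma> \<inter> \<psi> -` A \<subseteq> carrier \<Gamma>" by blast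
    from m4[rule_format, OF c(1) this] show "\<nu> (g <#\<^bsub>K\<^esub> A) = \<nu> A" unfolding \<nu>_def eq .
  qed
  show ?thesis unfolding amenable_def by (intro exI[of _ \<nu>] conjI n1 n2 n3 n4)
qed

lemma eval_sub:
  assumes GG: "group G" and H: "subgroup H G" and f: "\<forall>x\<in>letters w. f x \<in> H"
  shows "eval_word (G\<lparr>carrier := H\<rparr>) f w = eval_word G f w"
  using f
proof (induction w)
  case Nil then show ?case by simp
next
  case (Cons a w)
  obtain x b where a: "a = (x,b)" by force
  have fx: "f x \<in> H" and fw: "\<forall>y\<in>letters w. f y \<in> H" using Cons.prems by (auto simp: a)
  have "inv\<^bsub>G\<lparr>carrier := H\<rparr>\<^esub> (f x) = inv\<^bsub>G\<^esub> (f x)" by (rule group.m_inv_consistent[OF GG H fx])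
  then show ?case using Cons.IH[OF fw] by (simp add: a)
qed

lemma free_quot:
  assumes GG: "group \<Gamma>" and KK: "group K" and ep: "\<psi> \<in> epi \<Gamma> K" and fr: "has_free_subgroup K"
  shows "has_free_subgroup \<Gamma>"
proof -
  have hh: "\<psi> \<in> hom \<Gamma> K" and sj: "\<psi> ` carrier \<Gamma> = carrier K" using ep unfolding epi_def by blast+
  interpret Ga: group \<Gamma> by fact
  interpret K: group K by fact
  interpret p: group_hom \<Gamma> K \<psi>
    by (rule group_hom.intro[OF GG KK]) (rule group_hom_axioms.intro[OF hh])
  obtain H where H: "subgroup H K" and nf: "nonabelian_free (K\<lparr>carrier := H\<rparr>)"
    using fr unfolding has_free_subgroup_def by blast
  obtain B x y where fb: "free_basis (K\<lparr>carrier := H\<rparr>) B" and xB: "x \<in> B" and yB: "y \<in> B" and xy: "x \<noteq> y"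
    using nf unfolding nonabelian_free_def by blast
  have BH: "B \<subseteq> H" using fb unfolding free_basis_def by simp
  have Hc: "H \<subseteq> carrier K" by (rule subgroup.subset[OF H])
  have xc: "x \<in> carrier K" and yc: "y \<in> carrier K" using BH Hc xB yB by auto
  have "x \<in> \<psi> ` carrier \<Gamma>" using xc sj by simp
  then obtain x' where x': "x' \<in> carrier \<Gamma>" "\<psi> x' = x" by (auto simp: image_iff)
  have "y \<in> \<psi> ` carrier \<Gamma>" using yc sj by simp
  then obtain y' where y': "y' \<in> carrier \<Gamma>" "\<psi> y' = y" by (auto simp: image_iff)
  define H' where "H' = generate \<Gamma> {x', y'}"
  have sub: "{x', y'} \<subseteq> carrier \<Gamma>" using x' y' by simp
  have H'sub: "subgroup H' \<Gamma>" unfolding H'_def by (rule Ga.generate_is_subgroup[OF sub])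
  have incl: "{x', y'} \<subseteq> H'" unfolding H'_def using generate.incl[of _ "{x', y'}" \<Gamma>] by blast
  have gen: "generate (\<Gamma>\<lparr>carrier := H'\<rparr>) {x', y'} = carrier (\<Gamma>\<lparr>carrier := H'\<rparr>)"
    using Ga.generate_consistent[OF incl H'sub] unfolding H'_def by simp
  have H'c: "H' \<subseteq> carrier \<Gamma>" by (rule subgroup.subset[OF H'sub])
  have free: "eval_word (\<Gamma>\<lparr>carrier := H'\<rparr>) f w \<noteq> \<one>\<^bsub>\<Gamma>\<lparr>carrier := H'\<rparr>\<^esub>"
    if inj: "inj_on f (letters w)" and fl: "f ` letters w \<subseteq> {x', y'}" and red: "reduced w" and ne: "w \<noteq> []"
    for f :: "nat \<Rightarrow> 'a" and w
  proof
    assume e: "eval_word (\<Gamma>\<lparr>carrier := H'\<rparr>) f w = \<one>\<^bsub>\<Gamma>\<lparr>carrier := H'\<rparr>\<^esub>"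
    have fH': "\<forall>z\<in>letters w. f z \<in> H'" using fl incl by blast
    have fc: "\<forall>z\<in>letters w. f z \<in> carrier \<Gamma>" using fH' H'c by blast
    have e2: "eval_word \<Gamma> f w = \<one>\<^bsub>\<Gamma>\<^esub>" using e eval_sub[OF GG H'sub fH'] by simp
    have e3: "eval_word K (\<psi> \<circ> f) w = \<one>\<^bsub>K\<^esub>"
      using eval_hom[OF GG KK hh fc] e2 by simp
    have pf: "(\<psi> \<circ> f) ` letters w \<subseteq> {x, y}" using fl x' y' by auto
    have pfH: "\<forall>z\<in>letters w. (\<psi> \<circ> f) z \<in> H" using pf BH xB yB by blast
    have e4: "eval_word (K\<lparr>carrier := H\<rparr>) (\<psi> \<circ> f) w = \<one>\<^bsub>K\<lparr>carrier := H\<rparr>\<^esub>"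
      using e3 eval_sub[OF KK H pfH] by (simp add: o_def)
    have pinj: "inj_on (\<psi> \<circ> f) (letters w)"
    proof (rule inj_onI)
      fix a b assume a: "a \<in> letters w" and b: "b \<in> letters w" and eq: "(\<psi> \<circ> f) a = (\<psi> \<circ> f) b"
      have "f a = f b"
      proof (rule ccontr)
        assume ne: "f a \<noteq> f b"
        have "f a \<in> {x', y'}" "f b \<in> {x', y'}" using fl a b by auto
        then have "(f a = x' \<and> f b = y') \<or> (f a = y' \<and> f b = x')" using ne by auto
        then show False using eq x' y' xy by auto
      qed
      then show "a = b" using inj a b by (simp add: inj_on_eq_iff)
    qed
    have "(\<psi> \<circ> f) ` letters w \<subseteq> B" using pf xB yB by blast
    then show False using fb pinj red ne e4 unfolding free_basis_def by blast
  qed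
  have x'y': "x' \<noteq> y'" using x' y' xy by auto
  have "free_basis (\<Gamma>\<lparr>carrier := H'\<rparr>) {x', y'}"
    unfolding free_basis_def using incl gen free by simp
  moreover have "group (\<Gamma>\<lparr>carrier := H'\<rparr>)" by (rule Ga.subgroup_imp_group[OF H'sub])
  ultimately have "nonabelian_free (\<Gamma>\<lparr>carrier := H'\<rparr>)"
    unfolding nonabelian_free_def using x'y' by blast
  then show ?thesis unfolding has_free_subgroup_def using H'sub by blast
qed


theorem mainTheorem6:
  fixes k :: nat
    and Gs :: "nat \<Rightarrow> ('a, 'b) monoid_scheme" and Ss :: "nat \<Rightarrow> nat \<Rightarrow> 'a"
    and G :: "('a, 'b) monoid_scheme" and S :: "nat \<Rightarrow> 'a"
    and P :: group_property
    and \<Gamma> :: "('c, 'd) monoid_scheme" and h :: "'c \<Rightarrow> 'a"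
  assumes "k \<ge> 2"
    and "\<forall>n. marked_group k (Gs n) (Ss n)"
    and "marked_group k G S"
    and "marked_converges k Gs Ss G S"
    and "\<forall>\<^sub>F n in sequentially. has_property P (Gs n)"
    and "finitely_presented \<Gamma>"
    and "h \<in> epi \<Gamma> G"
  shows "has_property P \<Gamma>"
proof -
  have ev: "\<forall>\<^sub>F n in sequentially. (\<exists>\<psi>. \<psi> \<in> epi \<Gamma> (Gs n)) \<and> has_property P (Gs n)"
    using eventually_conj[OF fp_epi_eventually[OF assms(2,3,4,6,7)] assms(5)] .
  then obtain N where N: "\<forall>n\<ge>N. (\<exists>\<psi>. \<psi> \<in> epi \<Gamma> (Gs n)) \<and> has_property P (Gs n)"
    unfolding eventually_sequentially ..
  then have "(\<exists>\<psi>. \<psi> \<in> epi \<Gamma> (Gs N)) \<and> has_property P (Gs N)" by blast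
  then obtain \<psi> where ep: "\<psi> \<in> epi \<Gamma> (Gs N)" and hp: "has_property P (Gs N)" by blast
  have GG: "group \<Gamma>" using assms(6) unfolding finitely_presented_def by blast
  have KK: "group (Gs N)" using assms(2) unfolding marked_group_def by blast
  show ?thesis
  proof (cases P)
    case NA
    then show ?thesis using hp amenable_quot[OF GG KK ep] by auto
  next
    case Fr
    then show ?thesis using hp free_quot[OF GG KK ep] by auto
  next
    case La
    then show ?thesis using hp large_quot[OF GG KK ep] by auto
  qed
qed

end
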